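(* In the setting of the context, let $P=L^-_{sym}+\tau^+I$, $\bar P=\overline{L^-_{sym}}+\tau^+I$, $Q=L^+_{sym}+\tau^-I$, $\bar Q=\overline{L^+_{sym}}+\tau^-I$, and assume $\|P-\bar P\|\le\Delta_P$ and $\|Q-\bar Q\|\le\Delta_Q$. Then $$\|T-\bar T\|\le\frac{\alpha_s^++\Delta_Q}{\tau^+}\left(\frac{\Delta_P}{\tau^+}+2\sqrt{\frac{\Delta_P}{\tau^+}}\right)+\frac{\Delta_Q}{\tau^+},$$ where $\alpha_s^+=1+\tau^-+\frac{p(1-\eta)}{d_s^+}$.
   Context: SSBM: integers $n\ge2,k\ge2$, $p\in(0,1]$, $\eta\in[0,1/2)$, partition of $[n]$ into nonempty clusters $C_1,\dots,C_k$, $|C_i|=n_i$; edges present independently w.p. $p$, signed $+1$ within and $-1$ across clusters, signs flipped independently w.p. $\eta$. $A^\pm$ positive/negative 0/1 adjacency matrices (of a realization in which all degrees are positive), $D^\pm=\mathrm{diag}(A^\pm\mathbf1)$. $\tau^+>0,\tau^-\ge0$. $L^\pm_{sym}=I-(D^\pm)^{-1/2}A^\pm(D^\pm)^{-1/2}$, $\overline{L^\pm_{sym}}=I-(\mathbb ED^\pm)^{-1/2}\mathbb EA^\pm(\mathbb ED^\pm)^{-1/2}$, $T=(L^-_{sym}+\tau^+I)^{-1/2}(L^+_{sym}+\tau^-I)(L^-_{sym}+\tau^+I)^{-1/2}$, $\bar T$ the same with overlined matrices. $d_s^+=p(ns(1-2\eta)+n\eta-(1-\eta))$ is the expected positive degree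 of a node in a smallest cluster, $s=\min_in_i/n$ (assumed positive). *)

theory Defs
  imports "HOL-Analysis.Analysis"
begin

text \<open>Matrices are n x n real matrices indexed by a finite type 'n (CARD('n) = n).\<close>

definition diag_mat :: "('n::finite \<Rightarrow> real) \<Rightarrow> real^'n^'n" where
  "diag_mat d = (\<chi> i j. if i = j then d i else 0)"

definition deg :: "real^'n^'n \<Rightarrow> 'n::finite \<Rightarrow> real" where
  "deg A i = (\<Sum>j\<in>UNIV. A $ i $ j)"

definition sym_lap :: "real^'n^'n \<Rightarrow> real^'n^'n" where
  "sym_lap A = mat 1 - diag_mat (\<lambda>i. 1 / sqrt (deg A i)) ** A ** diag_mat (\<lambda>i. 1 / sqrt (deg A i))"

definition spec_norm :: "real^'n^'n \<Rightarrow> real" where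
  "spec_norm M = onorm (\<lambda>x. M *v x)"

definition pos_def_mat :: "real^'n^'n \<Rightarrow> bool" where
  "pos_def_mat M \<longleftrightarrow> transpose M = M \<and> (\<forall>x. x \<noteq> 0 \<longrightarrow> x \<bullet> (M *v x) > 0)"

definition mat_inv_sqrt :: "real^'n^'n \<Rightarrow> real^'n^'n" where
  "mat_inv_sqrt M = (THE S. pos_def_mat S \<and> S ** S ** M = mat 1)"

definition T_mat :: "real^'n^'n \<Rightarrow> real^'n^'n \<Rightarrow> real \<Rightarrow> real \<Rightarrow> real^'n^'n" where
  "T_mat Lplus Lminus tau_plus tau_minus =
     mat_inv_sqrt (Lminus + tau_plus *\<^sub>R mat 1) ** (Lplus + tau_minus *\<^sub>R mat 1)
       ** mat_inv_sqrt (Lminus + tau_plus *\<^sub>R mat 1)"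

text \<open>Expected positive/negative adjacency matrices of the SSBM (no self-loops).\<close>
definition exp_adj_pos :: "real \<Rightarrow> real \<Rightarrow> ('n::finite \<Rightarrow> 'k) \<Rightarrow> real^'n^'n" where
  "exp_adj_pos p \<eta> cl = (\<chi> i j. if i = j then 0 else if cl i = cl j then p * (1 - \<eta>) else p * \<eta>)"

definition exp_adj_neg :: "real \<Rightarrow> real \<Rightarrow> ('n::finite \<Rightarrow> 'k) \<Rightarrow> real^'n^'n" where
  "exp_adj_neg p \<eta> cl = (\<chi> i j. if i = j then 0 else if cl i = cl j then p * \<eta> else p * (1 - \<eta>))"

text \<open>(Ap, Am) is a realization of the SSBM with parameters p, eta and cluster map cl, i.e.
  lies in the support of the model: symmetric 0/1 matrices with zero diagonal; each pair
  i \<noteq> j carries at most one signed edge; a missing edge requires p < 1; an edge with the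
  "wrong" sign requires eta > 0.\<close>
definition ssbm_realization :: "real \<Rightarrow> real \<Rightarrow> ('n::finite \<Rightarrow> 'k) \<Rightarrow> real^'n^'n \<Rightarrow> real^'n^'n \<Rightarrow> bool" where
  "ssbm_realization p \<eta> cl Ap Am \<longleftrightarrow>
     (\<forall>i j. Ap $ i $ j \<in> {0, 1} \<and> Am $ i $ j \<in> {0, 1}) \<and>
     transpose Ap = Ap \<and> transpose Am = Am \<and>
     (\<forall>i. Ap $ i $ i = 0 \<and> Am $ i $ i = 0) \<and>
     (\<forall>i j. i \<noteq> j \<longrightarrow>
        \<not> (Ap $ i $ j = 1 \<and> Am $ i $ j = 1) \<and>
        (Ap $ i $ j = 0 \<and> Am $ i $ j = 0 \<longrightarrow> p < 1) \<and>
        (Ap $ i $ j = 1 \<and> cl i \<noteq> cl j \<longrightarrow> \<eta> > 0) \<and>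
        (Am $ i $ j = 1 \<and> cl i = cl j \<longrightarrow> \<eta> > 0))"

definition smin :: "('n::finite \<Rightarrow> 'k::finite) \<Rightarrow> real" where
  "smin cl = real (Min (range (\<lambda>c. card {i. cl i = c}))) / real CARD('n)"

definition ds_plus :: "real \<Rightarrow> real \<Rightarrow> ('n::finite \<Rightarrow> 'k::finite) \<Rightarrow> real" where
  "ds_plus p \<eta> cl = p * (real CARD('n) * smin cl * (1 - 2 * \<eta>) + real CARD('n) * \<eta> - (1 - \<eta>))"

end

theory Submission
  imports Defs
begin


lemma bl_mat: "bounded_linear (\<lambda>x. (M::real^'n^'n) *v x)"
  by (simp add: linear_conv_bounded_linear)

lemma spec_norm_bound: "norm ((M::real^'n^'n) *v x) \<le> spec_norm M * norm x"
  unfolding spec_norm_def by (rule onorm[OF bl_mat])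

lemma spec_norm_le: assumes "\<And>x. norm ((M::real^'n^'n) *v x) \<le> c * norm x" shows "spec_norm M \<le> c"
  unfolding spec_norm_def by (rule onorm_le) (use assms in auto)

lemma spec_norm_nonneg: "0 \<le> spec_norm (M::real^'n^'n)"
  unfolding spec_norm_def by (rule onorm_pos_le[OF bl_mat])

lemma spec_norm_mult: "spec_norm ((A::real^'n^'n) ** B) \<le> spec_norm A * spec_norm B"
proof (rule spec_norm_le)
  fix x
  have "norm ((A ** B) *v x) = norm (A *v (B *v x))" by (simp add: matrix_vector_mul_assoc)
  also have "\<dots> \<le> spec_norm A * norm (B *v x)" by (rule spec_norm_bound)
  also have "\<dots> \<le> spec_norm A * (spec_norm B * norm x)"
    by (rule mult_left_mono[OF spec_norm_bound spec_norm_nonneg])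
  finally show "norm ((A ** B) *v x) \<le> spec_norm A * spec_norm B * norm x" by simp
qed

lemma spec_norm_add: "spec_norm ((A::real^'n^'n) + B) \<le> spec_norm A + spec_norm B"
proof (rule spec_norm_le)
  fix x
  have "norm ((A + B) *v x) = norm (A *v x + B *v x)" by (simp add: matrix_vector_mult_add_rdistrib)
  also have "\<dots> \<le> norm (A *v x) + norm (B *v x)" by (rule norm_triangle_ineq)
  also have "\<dots> \<le> spec_norm A * norm x + spec_norm B * norm x"
    by (intro add_mono spec_norm_bound)
  finally show "norm ((A + B) *v x) \<le> (spec_norm A + spec_norm B) * norm x" by (simp add: algebra_simps)
qed

lemma spec_norm_minus_commute: "spec_norm ((A::real^'n^'n) - B) = spec_norm (B - A)"
proof -
  have "\<And>x. norm ((A - B) *v x) = norm ((B - A) *v x)"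
    by (metis matrix_vector_mult_diff_rdistrib norm_minus_commute)
  then show ?thesis
    by (metis antisym spec_norm_bound spec_norm_le)
qed



definition onb :: "('n::finite \<Rightarrow> real^'n) \<Rightarrow> bool" where
  "onb u \<longleftrightarrow> (\<forall>i j. u i \<bullet> u j = (if i = j then 1 else 0))"

definition emat :: "('n::finite \<Rightarrow> real^'n) \<Rightarrow> ('n \<Rightarrow> real) \<Rightarrow> real^'n^'n" where
  "emat u f = (\<chi> a b. \<Sum>i\<in>UNIV. f i * (u i $ a * u i $ b))"

lemma sym_inner: assumes "transpose A = (A::real^'n^'n)" shows "(A *v x) \<bullet> y = x \<bullet> (A *v y)"
  by (metis assms dot_lmul_matrix vector_transpose_matrix)

lemma emat_mult_vec: "emat u f *v x = (\<Sum>i\<in>UNIV. (f i * (u i \<bullet> x)) *\<^sub>R u i)"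
proof -
  have "(emat u f *v x) $ a = (\<Sum>i\<in>UNIV. (f i * (u i \<bullet> x)) *\<^sub>R u i) $ a" for a
  proof -
    have "(emat u f *v x) $ a = (\<Sum>b\<in>UNIV. (\<Sum>i\<in>UNIV. f i * (u i $ a * u i $ b)) * x $ b)"
      by (simp add: emat_def matrix_vector_mult_def)
    also have "\<dots> = (\<Sum>b\<in>UNIV. \<Sum>i\<in>UNIV. f i * (u i $ a * u i $ b) * x $ b)"
      by (simp add: sum_distrib_right)
    also have "\<dots> = (\<Sum>i\<in>UNIV. \<Sum>b\<in>UNIV. f i * (u i $ a * u i $ b) * x $ b)"
      by (rule sum.swap)
    also have "\<dots> = (\<Sum>i\<in>UNIV. (f i * (u i \<bullet> x)) * u i $ a)"
      by (simp add: inner_vec_def sum_distrib_left sum_distrib_right mult_ac)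
    also have "\<dots> = (\<Sum>i\<in>UNIV. (f i * (u i \<bullet> x)) *\<^sub>R u i) $ a"
      by (simp add: sum_component)
    finally show ?thesis .
  qed
  then show ?thesis by (simp add: vec_eq_iff)
qed

lemma onb_sum_delta: assumes "onb u" shows "(\<Sum>i\<in>UNIV. c i * (u i \<bullet> u j)) = c j"
proof -
  have "(\<Sum>i\<in>UNIV. c i * (u i \<bullet> u j)) = (\<Sum>i\<in>UNIV. if i = j then c i else 0)"
    using assms unfolding onb_def by (intro sum.cong) auto
  then show ?thesis by simp
qed

lemma onb_inj: "onb u \<Longrightarrow> inj u"
  unfolding onb_def inj_def by (metis one_neq_zero)

lemma onb_span: fixes u :: "'n::finite \<Rightarrow> real^'n" assumes "onb u" shows "span (range u) = UNIV"
proof -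
  have po: "pairwise orthogonal (range u)"
    using assms unfolding onb_def pairwise_def orthogonal_def by auto
  have "0 \<notin> range u" using assms unfolding onb_def by (metis imageE inner_zero_left zero_neq_one)
  then have ind: "independent (range u)" using po pairwise_orthogonal_independent by blast
  have "card (range u) = CARD('n)" using onb_inj[OF assms] by (simp add: card_image)
  then have "dim (UNIV :: (real^'n) set) \<le> card (range u)" by simp
  then have "UNIV \<subseteq> span (range u)" using card_ge_dim_independent[OF _ ind] by blast
  then show ?thesis by auto
qed

lemma onb_expand: assumes "onb u" shows "x = (\<Sum>i\<in>UNIV. (u i \<bullet> x) *\<^sub>R u i)"
proof -
  let ?y = "x - (\<Sum>i\<in>UNIV. (u i \<bullet> x) *\<^sub>R u i)"
  have o: "orthogonal ?y (u j)" for j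
  proof -
    have "(\<Sum>i\<in>UNIV. (u i \<bullet> x) *\<^sub>R u i) \<bullet> u j = (\<Sum>i\<in>UNIV. (u i \<bullet> x) * (u i \<bullet> u j))"
      by (simp add: inner_sum_left)
    also have "\<dots> = u j \<bullet> x" using onb_sum_delta[OF assms] .
    finally have "(\<Sum>i\<in>UNIV. (u i \<bullet> x) *\<^sub>R u i) \<bullet> u j = x \<bullet> u j" by (simp add: inner_commute)
    then show ?thesis unfolding orthogonal_def by (simp add: inner_diff_left)
  qed
  have "?y \<in> span (range u)" using onb_span[OF assms] by auto
  then have "orthogonal ?y ?y" using orthogonal_to_span o by blast
  then show ?thesis unfolding orthogonal_def by simp
qed

lemma onb_coef: assumes "onb u" shows "u k \<bullet> (\<Sum>j\<in>UNIV. d j *\<^sub>R u j) = d k"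
proof -
  have "u k \<bullet> (\<Sum>j\<in>UNIV. d j *\<^sub>R u j) = (\<Sum>j\<in>UNIV. d j * (u j \<bullet> u k))"
    by (simp add: inner_sum_right inner_commute)
  then show ?thesis using onb_sum_delta[OF assms] by simp
qed

lemma onb_inner: assumes "onb u"
  shows "(\<Sum>i\<in>UNIV. c i *\<^sub>R u i) \<bullet> (\<Sum>i\<in>UNIV. d i *\<^sub>R u i) = (\<Sum>i\<in>UNIV. c i * d i)"
  by (simp add: inner_sum_left onb_coef[OF assms])

lemma onb_norm_sq: assumes "onb u" shows "(norm x)^2 = (\<Sum>i\<in>UNIV. (u i \<bullet> x)^2)"
proof -
  have "(norm x)^2 = x \<bullet> x" by (simp add: power2_norm_eq_inner)
  also have "\<dots> = (\<Sum>i\<in>UNIV. (u i \<bullet> x) *\<^sub>R u i) \<bullet> (\<Sum>i\<in>UNIV. (u i \<bullet> x) *\<^sub>R u i)"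
    using onb_expand[OF assms, of x] by simp
  also have "\<dots> = (\<Sum>i\<in>UNIV. (u i \<bullet> x)^2)" by (simp add: onb_inner[OF assms] power2_eq_square)
  finally show ?thesis .
qed

lemma eig_step:
  fixes A :: "real^'n^'n"
  assumes sym: "transpose A = A" and E: "\<forall>e\<in>E. \<exists>l. A *v e = l *\<^sub>R e" and sp: "span E \<noteq> UNIV"
  shows "\<exists>v. norm v = 1 \<and> (\<forall>e\<in>E. e \<bullet> v = 0) \<and> (\<exists>l. A *v v = l *\<^sub>R v)"
proof -
  define W where "W = {x. \<forall>e\<in>E. e \<bullet> x = 0}"
  have subW: "subspace W" unfolding W_def
    using subspace_orthogonal_to_vectors[of E] by (simp add: orthogonal_def)
  have inv: "A *v x \<in> W" if "x \<in> W" for x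
  proof -
    have "e \<bullet> (A *v x) = 0" if "e \<in> E" for e
    proof -
      obtain l where "A *v e = l *\<^sub>R e" using E \<open>e \<in> E\<close> by blast
      then have "e \<bullet> (A *v x) = l * (e \<bullet> x)" using sym_inner[OF sym, of e x] by simp
      then show ?thesis using \<open>x \<in> W\<close> \<open>e \<in> E\<close> unfolding W_def by simp
    qed
    then show ?thesis unfolding W_def by simp
  qed
  define K where "K = W \<inter> sphere 0 1"
  have cK: "compact K" unfolding K_def using closed_subspace[OF subW] compact_sphere
    by (metis compact_Int_closed Int_commute)
  obtain a where a0: "a \<noteq> 0" and aE: "span E \<subseteq> {x. a \<bullet> x = 0}"
    using span_not_univ_subset_hyperplane[OF sp] by blast
  have "a /\<^sub>R norm a \<in> K" unfolding K_def W_def using a0 aE span_base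
    by (fastforce simp: inner_commute)
  then have neK: "K \<noteq> {}" by blast
  have cont: "continuous_on K (\<lambda>x. x \<bullet> (A *v x))"
    by (intro continuous_intros continuous_on_id linear_continuous_on bl_mat)
  obtain v where vK: "v \<in> K" and vmax: "\<And>y. y \<in> K \<Longrightarrow> y \<bullet> (A *v y) \<le> v \<bullet> (A *v v)"
    using continuous_attains_sup[OF cK neK cont] by blast
  define \<mu> where "\<mu> = v \<bullet> (A *v v)"
  have vW: "v \<in> W" and nv: "norm v = 1" using vK unfolding K_def by auto
  have vv: "v \<bullet> v = 1" using nv by (simp add: norm_eq_1)
  have maxW: "x \<bullet> (A *v x) \<le> \<mu> * (x \<bullet> x)" if "x \<in> W" for x
  proof (cases "x = 0")
    case True then show ?thesis by simp
  next
    case False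
    let ?z = "x /\<^sub>R norm x"
    have "?z \<in> K" unfolding K_def using False subspace_scale[OF subW that] by simp
    then have "?z \<bullet> (A *v ?z) \<le> \<mu>" using vmax \<mu>_def by blast
    then have "(x \<bullet> (A *v x)) / (norm x)^2 \<le> \<mu>"
      by (simp add: matrix_vector_mult_scaleR power2_eq_square divide_inverse mult_ac)
    then show ?thesis using False
      by (simp add: divide_le_eq power2_norm_eq_inner mult.commute)
  qed
  define w where "w = A *v v - \<mu> *\<^sub>R v"
  have wW: "w \<in> W" unfolding w_def using inv[OF vW] subspace_diff[OF subW] subspace_scale[OF subW vW] by blast
  define N where "N = w \<bullet> w"
  define c where "c = w \<bullet> (A *v w) - \<mu> * N"
  have c0: "c \<le> 0" using maxW[OF wW] unfolding c_def N_def by simp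
  have "w \<bullet> (A *v v - \<mu> *\<^sub>R v) = N" using w_def N_def by simp
  then have wAv: "w \<bullet> (A *v v) - \<mu> * (v \<bullet> w) = N"
    by (simp add: inner_diff_right inner_commute)
  have quad: "2 * t * N + t^2 * c \<le> 0" for t
  proof -
    have "v + t *\<^sub>R w \<in> W" using subspace_add[OF subW vW subspace_scale[OF subW wW]] .
    from maxW[OF this]
    have le: "(v + t *\<^sub>R w) \<bullet> (A *v (v + t *\<^sub>R w)) \<le> \<mu> * ((v + t *\<^sub>R w) \<bullet> (v + t *\<^sub>R w))" .
    have e1: "(v + t *\<^sub>R w) \<bullet> (A *v (v + t *\<^sub>R w)) = \<mu> + 2 * t * (w \<bullet> (A *v v)) + t^2 * (w \<bullet> (A *v w))"
      using sym_inner[OF sym, of w v] inner_commute[of v "A *v w"]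
      by (simp add: \<mu>_def matrix_vector_right_distrib matrix_vector_mult_scaleR inner_add_left inner_add_right
          power2_eq_square algebra_simps)
    have e2: "(v + t *\<^sub>R w) \<bullet> (v + t *\<^sub>R w) = 1 + 2 * t * (v \<bullet> w) + t^2 * N"
      using vv by (simp add: N_def inner_add_left inner_add_right power2_eq_square algebra_simps inner_commute)
    have "\<mu> + 2 * t * (w \<bullet> (A *v v)) + t^2 * (w \<bullet> (A *v w)) \<le> \<mu> * (1 + 2 * t * (v \<bullet> w) + t^2 * N)"
      using le unfolding e1 e2 .
    then have "2 * t * (N + \<mu> * (v \<bullet> w)) + t^2 * (w \<bullet> (A *v w)) \<le> \<mu> * (2 * t * (v \<bullet> w)) + \<mu> * (t^2 * N)"
      using wAv by (simp add: algebra_simps)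
    then show ?thesis unfolding c_def by (simp add: algebra_simps)
  qed
  have N0: "N \<ge> 0" unfolding N_def by simp
  have "N = 0"
  proof (rule ccontr)
    assume "N \<noteq> 0"
    then have Np: "N > 0" using N0 by simp
    define t where "t = N / (1 - c)"
    have tp: "t > 0" using Np c0 unfolding t_def by simp
    have "2 * t * N + t^2 * c \<le> 0" by (rule quad)
    then have "t * (2 * N + t * c) \<le> 0" by (simp add: power2_eq_square algebra_simps)
    then have h: "2 * N + t * c \<le> 0" using tp by (simp add: mult_le_0_iff)
    have "t * (1 - c) = N" unfolding t_def using c0 by simp
    then have "t * c = t - N" by (simp add: algebra_simps)
    then show False using h tp Np by linarith
  qed
  then have "w = 0" unfolding N_def by simp
  then have "A *v v = \<mu> *\<^sub>R v" unfolding w_def by simp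
  then show ?thesis using nv vW unfolding W_def by blast
qed



lemma spectral_sets:
  fixes A :: "real^'n^'n"
  assumes sym: "transpose A = A"
  shows "k \<le> CARD('n) \<Longrightarrow> \<exists>E. finite E \<and> card E = k \<and> (\<forall>e\<in>E. norm e = 1 \<and> (\<exists>l. A *v e = l *\<^sub>R e))
           \<and> pairwise orthogonal E"
proof (induction k)
  case 0
  then show ?case by (intro exI[of _ "{}"]) auto
next
  case (Suc k)
  then obtain E where fE: "finite E" and cE: "card E = k" and eE: "\<forall>e\<in>E. norm e = 1 \<and> (\<exists>l. A *v e = l *\<^sub>R e)"
    and pE: "pairwise orthogonal E" by auto
  have "0 \<notin> E" using eE by force
  then have ind: "independent E" using pE pairwise_orthogonal_independent by blast
  have "span E \<noteq> UNIV"
  proof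
    assume "span E = UNIV"
    then have "dim (UNIV :: (real^'n) set) = card E" using dim_span dim_eq_card_independent[OF ind] by metis
    then show False using Suc.prems cE by simp
  qed
  then obtain v where nv: "norm v = 1" and ov: "\<forall>e\<in>E. e \<bullet> v = 0" and ev: "\<exists>l. A *v v = l *\<^sub>R v"
    using eig_step[OF sym] eE by blast
  have vE: "v \<notin> E" using ov nv by (metis inner_eq_zero_iff norm_zero zero_neq_one)
  show ?case
  proof (intro exI[of _ "insert v E"] conjI)
    show "finite (insert v E)" using fE by simp
    show "card (insert v E) = Suc k" using fE vE cE by simp
    show "\<forall>e\<in>insert v E. norm e = 1 \<and> (\<exists>l. A *v e = l *\<^sub>R e)" using eE nv ev by auto
    show "pairwise orthogonal (insert v E)" using pE ov
      by (auto simp: pairwise_insert orthogonal_def inner_commute)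
  qed
qed

lemma spectral:
  fixes A :: "real^'n^'n"
  assumes sym: "transpose A = A"
  shows "\<exists>u l. onb u \<and> A = emat u l"
proof -
  obtain E where fE: "finite E" and cE: "card E = CARD('n)" and eE: "\<forall>e\<in>E. norm e = 1 \<and> (\<exists>l. A *v e = l *\<^sub>R e)"
    and pE: "pairwise orthogonal E" using spectral_sets[OF sym, of "CARD('n)"] by auto
  obtain u where bu: "bij_betw u (UNIV::'n set) E"
    using finite_same_card_bij[OF _ fE, of "UNIV::'n set"] cE by auto
  have uE: "u i \<in> E" for i using bu bij_betwE by blast
  have onb: "onb u" unfolding onb_def
  proof (intro allI)
    fix i j
    show "u i \<bullet> u j = (if i = j then 1 else 0)"
    proof (cases "i = j")
      case True then show ?thesis using eE uE by (simp add: norm_eq_1)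
    next
      case False
      then have "u i \<noteq> u j" using bu by (metis bij_betw_iff_bijections iso_tuple_UNIV_I)
      then show ?thesis using pE uE False unfolding pairwise_def orthogonal_def by auto
    qed
  qed
  define l where "l i = (SOME l. A *v u i = l *\<^sub>R u i)" for i
  have eig: "A *v u i = l i *\<^sub>R u i" for i
    unfolding l_def using eE uE by (metis (mono_tags, lifting) someI_ex)
  have "A = emat u l"
  proof (rule matrix_eq[THEN iffD2], intro allI)
    fix x
    have "A *v x = A *v (\<Sum>i\<in>UNIV. (u i \<bullet> x) *\<^sub>R u i)" using onb_expand[OF onb, of x] by simp
    also have "\<dots> = (\<Sum>i\<in>UNIV. (u i \<bullet> x) *\<^sub>R (A *v u i))"
      by (simp add: linear_sum[OF matrix_vector_mul_linear] matrix_vector_mult_scaleR)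
    also have "\<dots> = emat u l *v x" by (simp add: emat_mult_vec eig mult_ac)
    finally show "A *v x = emat u l *v x" .
  qed
  then show ?thesis using onb by blast
qed

lemma emat_eig: assumes "onb u" shows "emat u f *v u j = f j *\<^sub>R u j"
proof -
  have "emat u f *v u j = (\<Sum>i\<in>UNIV. if i = j then f j *\<^sub>R u j else 0)"
    unfolding emat_mult_vec using assms unfolding onb_def by (intro sum.cong) auto
  also have "\<dots> = f j *\<^sub>R u j" by simp
  finally show ?thesis .
qed

lemma emat_quad: assumes "onb u" shows "x \<bullet> (emat u f *v x) = (\<Sum>i\<in>UNIV. f i * (u i \<bullet> x)^2)"
proof -
  have "x \<bullet> (emat u f *v x) = (\<Sum>i\<in>UNIV. (u i \<bullet> x) *\<^sub>R u i) \<bullet> (\<Sum>i\<in>UNIV. (f i * (u i \<bullet> x)) *\<^sub>R u i)"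
    using onb_expand[OF assms, of x] emat_mult_vec by metis
  also have "\<dots> = (\<Sum>i\<in>UNIV. f i * (u i \<bullet> x)^2)" by (simp add: onb_inner[OF assms] power2_eq_square mult_ac)
  finally show ?thesis .
qed

lemma emat_mult: assumes "onb u" shows "emat u f ** emat u g = emat u (\<lambda>i. f i * g i)"
proof (rule matrix_eq[THEN iffD2], intro allI)
  fix x
  have "(emat u f ** emat u g) *v x = emat u f *v (emat u g *v x)" by (simp add: matrix_vector_mul_assoc)
  also have "\<dots> = (\<Sum>i\<in>UNIV. (f i * (u i \<bullet> (\<Sum>j\<in>UNIV. (g j * (u j \<bullet> x)) *\<^sub>R u j))) *\<^sub>R u i)"
    by (simp add: emat_mult_vec)
  also have "\<dots> = emat u (\<lambda>i. f i * g i) *v x" by (simp add: onb_coef[OF assms] emat_mult_vec mult_ac)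
  finally show "(emat u f ** emat u g) *v x = emat u (\<lambda>i. f i * g i) *v x" .
qed

lemma emat_one: assumes "onb u" shows "emat u (\<lambda>i. 1) = mat 1"
proof (rule matrix_eq[THEN iffD2], intro allI)
  fix x
  show "emat u (\<lambda>i. 1) *v x = mat 1 *v x" using onb_expand[OF assms, of x] by (simp add: emat_mult_vec)
qed

lemma emat_transpose: "transpose (emat u f) = emat u f"
  unfolding emat_def transpose_def vec_eq_iff
  by (auto intro!: sum.cong)

lemma emat_norm: assumes "onb u" and "\<And>i. \<bar>f i\<bar> \<le> c" shows "spec_norm (emat u f) \<le> c"
proof (rule spec_norm_le)
  fix x
  have c0: "0 \<le> c" using assms(2) abs_ge_zero order_trans by blast
  have "(norm (emat u f *v x))^2 = (emat u f *v x) \<bullet> (emat u f *v x)"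
    by (rule power2_norm_eq_inner)
  also have "\<dots> = (\<Sum>i\<in>UNIV. (f i * (u i \<bullet> x))^2)"
    unfolding emat_mult_vec onb_inner[OF assms(1)] by (simp add: power2_eq_square)
  also have "\<dots> \<le> (\<Sum>i\<in>UNIV. c^2 * (u i \<bullet> x)^2)"
  proof (intro sum_mono)
    fix i
    have "(f i)^2 \<le> c^2" using assms(2)[of i] by (metis abs_ge_zero power2_abs power_mono)
    then show "(f i * (u i \<bullet> x))^2 \<le> c^2 * (u i \<bullet> x)^2"
      by (simp add: power_mult_distrib mult_right_mono)
  qed
  also have "\<dots> = (c * norm x)^2" by (simp add: onb_norm_sq[OF assms(1)] sum_distrib_left power_mult_distrib)
  finally show "norm (emat u f *v x) \<le> c * norm x"
    using c0 by (meson mult_nonneg_nonneg norm_ge_zero power2_le_imp_le)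
qed



lemma spec_norm_zero_imp: assumes "spec_norm (M::real^'n^'n) \<le> 0" shows "M = 0"
proof (rule matrix_eq[THEN iffD2], intro allI)
  fix x
  have "norm (M *v x) \<le> spec_norm M * norm x" by (rule spec_norm_bound)
  also have "\<dots> \<le> 0" using assms by (simp add: mult_nonpos_nonneg)
  finally show "M *v x = 0 *v x" by simp
qed

lemma eig_diff:
  fixes A B :: "real^'n^'n"
  assumes sA: "transpose A = A" and sB: "transpose B = B"
    and pA: "\<forall>x. 0 \<le> x \<bullet> (A *v x)" and pB: "\<forall>x. 0 \<le> x \<bullet> (B *v x)"
    and vv: "v \<bullet> v = 1" and ev: "(A - B) *v v = l *\<^sub>R v"
  shows "l^2 \<le> \<bar>v \<bullet> ((A ** A - B ** B) *v v)\<bar>"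
proof -
  define a where "a = v \<bullet> (A *v v)"
  define b where "b = v \<bullet> (B *v v)"
  have a0: "a \<ge> 0" and b0: "b \<ge> 0" using pA pB a_def b_def by auto
  have Xv: "A *v v - B *v v = l *\<^sub>R v" using ev by (simp add: matrix_vector_mult_diff_rdistrib)
  have "l = v \<bullet> (l *\<^sub>R v)" using vv by simp
  also have "\<dots> = a - b" unfolding a_def b_def Xv[symmetric] by (simp add: inner_diff_right)
  finally have la: "l = a - b" .
  have "v \<bullet> ((A ** A - B ** B) *v v) = v \<bullet> (A *v (A *v v)) - v \<bullet> (B *v (B *v v))"
    by (simp add: matrix_vector_mult_diff_rdistrib matrix_vector_mul_assoc inner_diff_right)
  also have "\<dots> = (A *v v) \<bullet> (A *v v) - (B *v v) \<bullet> (B *v v)"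
    using sym_inner[OF sA, of v "A *v v"] sym_inner[OF sB, of v "B *v v"] by simp
  also have "\<dots> = (A *v v - B *v v) \<bullet> (A *v v + B *v v)"
    by (simp add: inner_diff_left inner_add_right inner_commute[of "B *v v" "A *v v"])
  also have "\<dots> = l * (a + b)" unfolding Xv a_def b_def
    by (simp only: inner_scaleR_left inner_add_right distrib_left)
  finally have eq: "v \<bullet> ((A ** A - B ** B) *v v) = l * (a + b)" .
  have "\<bar>l\<bar> \<le> a + b" using la a0 b0 by simp
  then have "\<bar>l\<bar> * \<bar>l\<bar> \<le> \<bar>l\<bar> * (a + b)" by (rule mult_left_mono) simp
  then have "l^2 \<le> \<bar>l\<bar> * (a + b)" by (simp add: power2_eq_square)
  also have "\<dots> = \<bar>l * (a + b)\<bar>" using a0 b0 by (simp add: abs_mult)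
  finally show ?thesis using eq by simp
qed

lemma sqrt_lip:
  fixes A B :: "real^'n^'n"
  assumes sA: "transpose A = A" and sB: "transpose B = B"
    and pA: "\<forall>x. 0 \<le> x \<bullet> (A *v x)" and pB: "\<forall>x. 0 \<le> x \<bullet> (B *v x)"
  shows "spec_norm (A - B) \<le> sqrt (spec_norm (A ** A - B ** B))"
proof -
  have "transpose (A - B) = A - B" using sA sB by (simp add: transpose_def vec_eq_iff)
  then obtain u l where onb: "onb u" and X: "A - B = emat u l" using spectral by blast
  have "\<bar>l i\<bar> \<le> sqrt (spec_norm (A ** A - B ** B))" for i
  proof -
    have uu: "u i \<bullet> u i = 1" using onb unfolding onb_def by simp
    then have nu: "norm (u i) = 1" by (simp add: norm_eq_1)
    have "(l i)^2 \<le> \<bar>u i \<bullet> ((A ** A - B ** B) *v u i)\<bar>"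
      by (rule eig_diff[OF sA sB pA pB uu]) (simp add: X emat_eig[OF onb])
    also have "\<dots> \<le> norm (u i) * norm ((A ** A - B ** B) *v u i)" by (rule Cauchy_Schwarz_ineq2)
    also have "\<dots> \<le> spec_norm (A ** A - B ** B)" using spec_norm_bound[of _ "u i"] nu by simp
    finally have "sqrt ((l i)^2) \<le> sqrt (spec_norm (A ** A - B ** B))" by (rule real_sqrt_le_mono)
    then show ?thesis by simp
  qed
  then show ?thesis unfolding X by (rule emat_norm[OF onb])
qed

lemma psd_sq_unique:
  fixes A B :: "real^'n^'n"
  assumes sA: "transpose A = A" and sB: "transpose B = B"
    and pA: "\<forall>x. 0 \<le> x \<bullet> (A *v x)" and pB: "\<forall>x. 0 \<le> x \<bullet> (B *v x)"
    and eq: "A ** A = B ** B"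
  shows "A = B"
proof -
  have "spec_norm (A - B) \<le> sqrt (spec_norm (A ** A - B ** B))" by (rule sqrt_lip[OF assms(1-4)])
  also have "spec_norm (A ** A - B ** B) = 0"
  proof -
    have "spec_norm (0::real^'n^'n) \<le> 0" by (rule spec_norm_le) simp
    then show ?thesis using eq spec_norm_nonneg[of "0::real^'n^'n"] by simp
  qed
  finally have "spec_norm (A - B) \<le> 0" by simp
  then have "A - B = 0" by (rule spec_norm_zero_imp)
  then show ?thesis by simp
qed

lemma transpose_mul_sym: "transpose A = A \<Longrightarrow> transpose B = B \<Longrightarrow> transpose (A ** B) = B ** (A::real^'n^'n)"
  by (simp add: matrix_transpose_mul)

lemma sqrt_facts:
  fixes P :: "real^'n^'n" and \<tau> :: real
  assumes sym: "transpose P = P" and pos: "\<forall>x. \<tau> * (x \<bullet> x) \<le> x \<bullet> (P *v x)" and tp: "\<tau> > 0"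
  shows "\<exists>R. transpose R = R \<and> (\<forall>x. 0 \<le> x \<bullet> (R *v x)) \<and> R ** R = P
     \<and> R ** mat_inv_sqrt P = mat 1 \<and> mat_inv_sqrt P ** R = mat 1
     \<and> spec_norm (mat_inv_sqrt P) \<le> 1 / sqrt \<tau> \<and> transpose (mat_inv_sqrt P) = mat_inv_sqrt P
     \<and> (\<forall>x. 0 \<le> x \<bullet> (mat_inv_sqrt P *v x))"
proof -
  obtain u l where onb: "onb u" and Pe: "P = emat u l" using spectral[OF sym] by blast
  have lt: "l i \<ge> \<tau>" for i
  proof -
    have uu: "u i \<bullet> u i = 1" using onb unfolding onb_def by simp
    have "u i \<bullet> (P *v u i) = l i" using uu by (simp add: Pe emat_eig[OF onb])
    then show ?thesis using pos[rule_format, of "u i"] uu by simp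
  qed
  have lp: "l i > 0" for i using lt[of i] tp by linarith
  define S where "S = emat u (\<lambda>i. 1 / sqrt (l i))"
  define R where "R = emat u (\<lambda>i. sqrt (l i))"
  have sS: "transpose S = S" and sR: "transpose R = R" unfolding S_def R_def by (rule emat_transpose)+
  have pS: "\<forall>x. 0 \<le> x \<bullet> (S *v x)" unfolding S_def emat_quad[OF onb]
  proof (intro allI sum_nonneg)
    fix x i show "0 \<le> 1 / sqrt (l i) * (u i \<bullet> x)^2" using lp[of i] by simp
  qed
  have pR: "\<forall>x. 0 \<le> x \<bullet> (R *v x)" unfolding R_def emat_quad[OF onb]
  proof (intro allI sum_nonneg)
    fix x i show "0 \<le> sqrt (l i) * (u i \<bullet> x)^2" using lp[of i] by simp
  qed
  have pdS: "pos_def_mat S" unfolding pos_def_mat_def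
  proof (intro conjI sS allI impI)
    fix x :: "real^'n" assume "x \<noteq> 0"
    then obtain i where ui: "u i \<bullet> x \<noteq> 0"
      using onb_expand[OF onb, of x] by (metis (no_types, lifting) scale_zero_left sum.neutral)
    have "0 < 1 / sqrt (l i) * (u i \<bullet> x)^2" using ui lp[of i] by simp
    also have "\<dots> \<le> (\<Sum>j\<in>UNIV. 1 / sqrt (l j) * (u j \<bullet> x)^2)"
    proof (rule member_le_sum)
      fix j show "0 \<le> 1 / sqrt (l j) * (u j \<bullet> x)^2" using lp[of j] by simp
    qed simp_all
    finally show "0 < x \<bullet> (S *v x)" unfolding S_def emat_quad[OF onb] .
  qed
  have SSP: "S ** S ** P = mat 1"
  proof -
    have "S ** S ** P = emat u (\<lambda>i. 1 / sqrt (l i) * (1 / sqrt (l i)) * l i)"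
      unfolding S_def Pe by (simp add: emat_mult[OF onb])
    also have "(\<lambda>i. 1 / sqrt (l i) * (1 / sqrt (l i)) * l i) = (\<lambda>i. 1)"
    proof
      fix i
      have "sqrt (l i) * sqrt (l i) = l i" using lp[of i] by simp
      moreover have "sqrt (l i) \<noteq> 0" using lp[of i] by simp
      ultimately show "1 / sqrt (l i) * (1 / sqrt (l i)) * l i = 1" by (simp add: field_simps)
    qed
    finally show ?thesis using emat_one[OF onb] by simp
  qed
  have PSS: "P ** (S ** S) = mat 1"
  proof -
    have "transpose (S ** S ** P) = mat 1" using SSP by (simp add: transpose_mat)
    then show ?thesis using sym sS by (simp add: matrix_transpose_mul)
  qed
  have mS: "mat_inv_sqrt P = S" unfolding mat_inv_sqrt_def
  proof (rule the_equality)
    show "pos_def_mat S \<and> S ** S ** P = mat 1" using pdS SSP by simp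
  next
    fix S' assume h: "pos_def_mat S' \<and> S' ** S' ** P = mat 1"
    then have sS': "transpose S' = S'" and pd': "\<forall>x. x \<noteq> 0 \<longrightarrow> 0 < x \<bullet> (S' *v x)"
      unfolding pos_def_mat_def by auto
    have pS': "\<forall>x. 0 \<le> x \<bullet> (S' *v x)"
    proof
      fix x show "0 \<le> x \<bullet> (S' *v x)" using pd'[rule_format, of x] by (cases "x = 0") auto
    qed
    have "S' ** S' = (S' ** S') ** (P ** (S ** S))" using PSS by simp
    also have "\<dots> = (S' ** S' ** P) ** (S ** S)" by (simp add: matrix_mul_assoc)
    also have "\<dots> = S ** S" using h by simp
    finally show "S' = S" using psd_sq_unique[OF sS' sS pS' pS] by blast
  qed
  moreover have RR: "R ** R = P"
  proof -
    have "R ** R = emat u (\<lambda>i. sqrt (l i) * sqrt (l i))" unfolding R_def by (simp add: emat_mult[OF onb])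
    also have "(\<lambda>i. sqrt (l i) * sqrt (l i)) = l"
    proof
      fix i show "sqrt (l i) * sqrt (l i) = l i" using lp[of i] by simp
    qed
    finally show ?thesis using Pe by simp
  qed
  moreover have RS: "R ** S = mat 1" and SR: "S ** R = mat 1"
  proof -
    have "(\<lambda>i. sqrt (l i) * (1 / sqrt (l i))) = (\<lambda>i. 1)" "(\<lambda>i. 1 / sqrt (l i) * sqrt (l i)) = (\<lambda>i. 1)"
    proof -
      have "sqrt (l i) \<noteq> 0" for i using lp[of i] by simp
      then show "(\<lambda>i. sqrt (l i) * (1 / sqrt (l i))) = (\<lambda>i. 1)" "(\<lambda>i. 1 / sqrt (l i) * sqrt (l i)) = (\<lambda>i. 1)"
        by (auto simp: fun_eq_iff)
    qed
    then show "R ** S = mat 1" "S ** R = mat 1" unfolding R_def S_def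
      by (simp_all add: emat_mult[OF onb] emat_one[OF onb])
  qed
  moreover have nS: "spec_norm S \<le> 1 / sqrt \<tau>" unfolding S_def
  proof (rule emat_norm[OF onb])
    fix i
    have "sqrt \<tau> \<le> sqrt (l i)" using lt[of i] by simp
    then show "\<bar>1 / sqrt (l i)\<bar> \<le> 1 / sqrt \<tau>" using lp[of i] tp
      by (simp add: frac_le)
  qed
  show ?thesis unfolding mS using sR pR sS pS RR RS SR nS by blast
qed



lemma diag_mat_vec: "(diag_mat d *v x) $ i = d i * x $ i"
proof -
  have "(diag_mat d *v x) $ i = (\<Sum>j\<in>UNIV. (if i = j then d i else 0) * x $ j)"
    unfolding diag_mat_def matrix_vector_mult_def by simp
  also have "\<dots> = (\<Sum>j\<in>UNIV. if j = i then d i * x $ i else 0)" by (rule sum.cong) auto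
  finally show ?thesis by simp
qed

lemma transpose_diff: "transpose ((A::real^'n^'n) - B) = transpose A - transpose B"
  by (simp add: transpose_def vec_eq_iff)

lemma diag_mat_transpose: "transpose (diag_mat d) = diag_mat d"
  unfolding diag_mat_def transpose_def by (simp add: vec_eq_iff)

lemma quad_form: "y \<bullet> (A *v y) = (\<Sum>i\<in>UNIV. \<Sum>j\<in>UNIV. A $ i $ j * y $ i * y $ j)"
  unfolding inner_vec_def matrix_vector_mult_def by (simp add: sum_distrib_left mult_ac)

lemma transpose_entry: "transpose A = A \<Longrightarrow> A $ i $ j = A $ j $ i"
  by (metis transpose_def vec_lambda_beta)

lemma quad_le_deg:
  fixes A :: "real^'n^'n"
  assumes sA: "transpose A = A" and nn: "\<And>i j. 0 \<le> A $ i $ j"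
  shows "y \<bullet> (A *v y) \<le> (\<Sum>i\<in>UNIV. deg A i * (y $ i)^2)"
proof -
  have s1: "(\<Sum>i\<in>UNIV. \<Sum>j\<in>UNIV. A $ i $ j * (y $ j)^2) = (\<Sum>i\<in>UNIV. deg A i * (y $ i)^2)"
  proof -
    have "(\<Sum>i\<in>UNIV. \<Sum>j\<in>UNIV. A $ i $ j * (y $ j)^2) = (\<Sum>j\<in>UNIV. \<Sum>i\<in>UNIV. A $ j $ i * (y $ j)^2)"
      by (subst sum.swap) (simp add: transpose_entry[OF sA])
    then show ?thesis unfolding deg_def by (simp add: sum_distrib_right)
  qed
  have s2: "(\<Sum>i\<in>UNIV. \<Sum>j\<in>UNIV. A $ i $ j * (y $ i)^2) = (\<Sum>i\<in>UNIV. deg A i * (y $ i)^2)"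
    unfolding deg_def by (simp add: sum_distrib_right)
  have "y \<bullet> (A *v y) = (\<Sum>i\<in>UNIV. \<Sum>j\<in>UNIV. A $ i $ j * y $ i * y $ j)" by (rule quad_form)
  also have "\<dots> \<le> (\<Sum>i\<in>UNIV. \<Sum>j\<in>UNIV. A $ i $ j * ((y $ i)^2 + (y $ j)^2) / 2)"
  proof (intro sum_mono)
    fix i j
    have "2 * (y $ i * y $ j) \<le> (y $ i)^2 + (y $ j)^2"
      using zero_le_power2[of "y $ i - y $ j"] unfolding power2_diff by (simp add: mult.assoc)
    then have "A $ i $ j * (2 * (y $ i * y $ j)) \<le> A $ i $ j * ((y $ i)^2 + (y $ j)^2)"
      by (rule mult_left_mono[OF _ nn])
    then show "A $ i $ j * y $ i * y $ j \<le> A $ i $ j * ((y $ i)^2 + (y $ j)^2) / 2" by (simp add: mult_ac)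
  qed
  also have "\<dots> = ((\<Sum>i\<in>UNIV. \<Sum>j\<in>UNIV. A $ i $ j * (y $ i)^2) + (\<Sum>i\<in>UNIV. \<Sum>j\<in>UNIV. A $ i $ j * (y $ j)^2)) / 2"
    by (simp add: sum.distrib sum_divide_distrib distrib_left add_divide_distrib)
  also have "\<dots> = (\<Sum>i\<in>UNIV. deg A i * (y $ i)^2)" unfolding s1 s2 by simp
  finally show ?thesis .
qed

definition dh :: "real^'n^'n \<Rightarrow> real^'n^'n" where
  "dh A = diag_mat (\<lambda>i. 1 / sqrt (deg A i))"

lemma sym_lap_dh: "sym_lap A = mat 1 - dh A ** A ** dh A"
  unfolding sym_lap_def dh_def ..

lemma sym_lap_sym: "transpose A = A \<Longrightarrow> transpose (sym_lap A) = sym_lap A"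
  unfolding sym_lap_dh dh_def
  by (simp add: matrix_transpose_mul diag_mat_transpose transpose_diff transpose_mat matrix_mul_assoc)

lemma sym_lap_quad:
  "x \<bullet> (sym_lap A *v x) = x \<bullet> x - (dh A *v x) \<bullet> (A *v (dh A *v x))"
proof -
  have "x \<bullet> (sym_lap A *v x) = x \<bullet> x - x \<bullet> (dh A *v (A *v (dh A *v x)))"
    unfolding sym_lap_dh by (simp add: matrix_vector_mult_diff_rdistrib inner_diff_right matrix_vector_mul_assoc matrix_mul_assoc)
  also have "x \<bullet> (dh A *v (A *v (dh A *v x))) = (dh A *v x) \<bullet> (A *v (dh A *v x))"
    using sym_inner[of "dh A" x] unfolding dh_def by (simp add: diag_mat_transpose)
  finally show ?thesis .
qed

lemma dh_sq: assumes "\<forall>i. deg A i > 0"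
  shows "deg A i * ((dh A *v x) $ i)^2 = (x $ i)^2"
  using assms[rule_format, of i] unfolding dh_def diag_mat_vec
  by (simp add: power_mult_distrib power_divide less_imp_le)

lemma sym_lap_psd:
  fixes A :: "real^'n^'n"
  assumes sA: "transpose A = A" and nn: "\<And>i j. 0 \<le> A $ i $ j" and dp: "\<forall>i. deg A i > 0"
  shows "0 \<le> x \<bullet> (sym_lap A *v x)"
proof -
  have "(dh A *v x) \<bullet> (A *v (dh A *v x)) \<le> (\<Sum>i\<in>UNIV. deg A i * ((dh A *v x) $ i)^2)"
    by (rule quad_le_deg[OF sA nn])
  also have "\<dots> = (\<Sum>i\<in>UNIV. (x $ i)^2)" using dh_sq[OF dp] by simp
  also have "\<dots> = x \<bullet> x" by (simp add: inner_vec_def power2_eq_square)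
  finally show ?thesis unfolding sym_lap_quad by simp
qed



lemma sum_if_card: "(\<Sum>j\<in>(UNIV::'a::finite set). if P j then c else 0) = c * real (card {j. P j})"
proof -
  have "(\<Sum>j\<in>(UNIV::'a set). if P j then c else 0) = sum (\<lambda>j. c) {j\<in>UNIV. P j}"
    by (rule sum.inter_filter[symmetric]) simp
  then show ?thesis by simp
qed

lemma exp_pos_sym: "transpose (exp_adj_pos p \<eta> cl) = exp_adj_pos p \<eta> cl"
  unfolding exp_adj_pos_def transpose_def by (auto simp: vec_eq_iff)

lemma exp_neg_sym: "transpose (exp_adj_neg p \<eta> cl) = exp_adj_neg p \<eta> cl"
  unfolding exp_adj_neg_def transpose_def by (auto simp: vec_eq_iff)

lemma exp_pos_nn: "0 \<le> p \<Longrightarrow> 0 \<le> \<eta> \<Longrightarrow> \<eta> \<le> 1 \<Longrightarrow> 0 \<le> exp_adj_pos p \<eta> cl $ i $ j"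
  unfolding exp_adj_pos_def by auto

lemma exp_neg_nn: "0 \<le> p \<Longrightarrow> 0 \<le> \<eta> \<Longrightarrow> \<eta> \<le> 1 \<Longrightarrow> 0 \<le> exp_adj_neg p \<eta> cl $ i $ j"
  unfolding exp_adj_neg_def by auto

definition gmat :: "real \<Rightarrow> real \<Rightarrow> ('n::finite \<Rightarrow> 'k) \<Rightarrow> real^'n^'n" where
  "gmat p \<eta> cl = (\<chi> i j. if cl i = cl j then p * (1 - \<eta>) else p * \<eta>)"

lemma exp_pos_gmat: "exp_adj_pos p \<eta> cl = gmat p \<eta> cl - (p * (1 - \<eta>)) *\<^sub>R mat 1"
  unfolding exp_adj_pos_def gmat_def by (auto simp: vec_eq_iff mat_def)

lemma deg_exp_pos: "deg (exp_adj_pos p \<eta> (cl::'n::finite \<Rightarrow> 'k)) i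
   = p * (real CARD('n) * \<eta> + real (card {j. cl j = cl i}) * (1 - 2 * \<eta>) - (1 - \<eta>))"
proof -
  have e: "exp_adj_pos p \<eta> cl $ i $ j = p * \<eta> + (if cl j = cl i then p * (1 - 2 * \<eta>) else 0)
      - (if j = i then p * (1 - \<eta>) else 0)" for j
    unfolding exp_adj_pos_def by (auto simp: algebra_simps)
  have "deg (exp_adj_pos p \<eta> cl) i = (\<Sum>j\<in>(UNIV::'n set). p * \<eta>) + (\<Sum>j\<in>UNIV. if cl j = cl i then p * (1 - 2 * \<eta>) else 0)
      - (\<Sum>j\<in>UNIV. if j = i then p * (1 - \<eta>) else 0)"
    unfolding deg_def e by (simp add: sum.distrib sum_subtractf)
  also have "\<dots> = real CARD('n) * (p * \<eta>) + p * (1 - 2 * \<eta>) * real (card {j. cl j = cl i}) - p * (1 - \<eta>)"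
    by (simp add: sum_if_card)
  finally show ?thesis by (simp add: algebra_simps)
qed

lemma gmat_psd:
  fixes cl :: "'n::finite \<Rightarrow> 'k::finite"
  assumes "0 \<le> p" "0 \<le> \<eta>" "\<eta> \<le> 1/2"
  shows "0 \<le> y \<bullet> (gmat p \<eta> cl *v y)"
proof -
  define s where "s c = (\<Sum>j\<in>{j. cl j = c}. y $ j)" for c
  have inner: "(\<Sum>j\<in>UNIV. (if cl i = cl j then 1 else 0) * y $ j) = s (cl i)" for i
  proof -
    have "(\<Sum>j\<in>UNIV. (if cl i = cl j then 1 else 0) * y $ j) = (\<Sum>j\<in>UNIV. if cl j = cl i then y $ j else 0)"
      by (rule sum.cong) auto
    also have "\<dots> = (\<Sum>j\<in>{j\<in>UNIV. cl j = cl i}. y $ j)" by (rule sum.inter_filter[symmetric]) simp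
    finally show ?thesis unfolding s_def by simp
  qed
  have grp: "(\<Sum>i\<in>UNIV. y $ i * s (cl i)) = (\<Sum>c\<in>UNIV. (s c)^2)"
  proof -
    have "(\<Sum>i\<in>UNIV. y $ i * s (cl i)) = (\<Sum>c\<in>UNIV. \<Sum>i\<in>{x. x \<in> UNIV \<and> cl x = c}. y $ i * s (cl i))"
      by (rule sum.group[symmetric]) auto
    also have "\<dots> = (\<Sum>c\<in>UNIV. (s c)^2)"
    proof (rule sum.cong[OF refl])
      fix c
      have "(\<Sum>i\<in>{x. x \<in> UNIV \<and> cl x = c}. y $ i * s (cl i)) = (\<Sum>i\<in>{x. cl x = c}. y $ i * s c)"
        by (rule sum.cong) auto
      also have "\<dots> = (s c)^2" unfolding s_def by (simp add: sum_distrib_right power2_eq_square)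
      finally show "(\<Sum>i\<in>{x. x \<in> UNIV \<and> cl x = c}. y $ i * s (cl i)) = (s c)^2" .
    qed
    finally show ?thesis .
  qed
  have "y \<bullet> (gmat p \<eta> cl *v y) = (\<Sum>i\<in>UNIV. \<Sum>j\<in>UNIV. (p * \<eta> + p * (1 - 2 * \<eta>) * (if cl i = cl j then 1 else 0)) * y $ i * y $ j)"
    unfolding quad_form gmat_def by (intro sum.cong refl) (auto simp: algebra_simps)
  also have "\<dots> = (\<Sum>i\<in>UNIV. \<Sum>j\<in>UNIV. p * \<eta> * (y $ i * y $ j))
      + (\<Sum>i\<in>UNIV. \<Sum>j\<in>UNIV. p * (1 - 2 * \<eta>) * (y $ i * ((if cl i = cl j then 1 else 0) * y $ j)))"
    by (simp only: sum.distrib[symmetric]) (intro sum.cong refl, simp add: algebra_simps)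
  also have "\<dots> = p * \<eta> * ((\<Sum>i\<in>UNIV. y $ i) * (\<Sum>j\<in>UNIV. y $ j))
      + p * (1 - 2 * \<eta>) * (\<Sum>i\<in>UNIV. y $ i * (\<Sum>j\<in>UNIV. (if cl i = cl j then 1 else 0) * y $ j))"
  proof -
    have "p * \<eta> * ((\<Sum>i\<in>UNIV. y $ i) * (\<Sum>j\<in>UNIV. y $ j)) = p * \<eta> * (\<Sum>i\<in>UNIV. \<Sum>j\<in>UNIV. y $ i * y $ j)"
      by (simp only: sum_product)
    also have "\<dots> = (\<Sum>i\<in>UNIV. \<Sum>j\<in>UNIV. p * \<eta> * (y $ i * y $ j))"
      by (simp only: sum_distrib_left)
    finally have "(\<Sum>i\<in>UNIV. \<Sum>j\<in>UNIV. p * \<eta> * (y $ i * y $ j)) = p * \<eta> * ((\<Sum>i\<in>UNIV. y $ i) * (\<Sum>j\<in>UNIV. y $ j))" ..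
    moreover have "(\<Sum>i\<in>UNIV. \<Sum>j\<in>UNIV. p * (1 - 2 * \<eta>) * (y $ i * ((if cl i = cl j then 1 else 0) * y $ j)))
       = p * (1 - 2 * \<eta>) * (\<Sum>i\<in>UNIV. y $ i * (\<Sum>j\<in>UNIV. (if cl i = cl j then 1 else 0) * y $ j))"
      by (simp add: sum_distrib_left)
    ultimately show ?thesis by simp
  qed
  also have "\<dots> = p * \<eta> * (\<Sum>i\<in>UNIV. y $ i)^2 + p * (1 - 2 * \<eta>) * (\<Sum>c\<in>UNIV. (s c)^2)"
    unfolding inner grp by (simp add: power2_eq_square)
  also have "\<dots> \<ge> 0" using assms by (intro add_nonneg_nonneg mult_nonneg_nonneg sum_nonneg) auto
  finally show ?thesis by simp
qed



lemma mvm_assoc': "(A ** B) *v x = A *v (B *v (x::real^'n))"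
  by (simp add: matrix_vector_mul_assoc)

lemma expand_T:
  fixes S Sb E Q Qb :: "real^'n^'n"
  assumes "S = Sb + E"
  shows "S ** Q ** S - Sb ** Qb ** Sb = Sb ** (Q - Qb) ** Sb + E ** Q ** Sb + Sb ** Q ** E + E ** Q ** E"
proof (rule matrix_eq[THEN iffD2], intro allI)
  fix x
  show "(S ** Q ** S - Sb ** Qb ** Sb) *v x = (Sb ** (Q - Qb) ** Sb + E ** Q ** Sb + Sb ** Q ** E + E ** Q ** E) *v x"
    unfolding assms
    by (simp add: mvm_assoc' matrix_vector_mult_add_rdistrib matrix_vector_mult_diff_rdistrib
        matrix_vector_right_distrib matrix_vector_mult_diff_distrib algebra_simps)
qed

lemma spec_norm3:
  assumes "spec_norm X \<le> x0" "spec_norm Y \<le> y0" "spec_norm Z \<le> z0"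
  shows "spec_norm ((X::real^'n^'n) ** Y ** Z) \<le> x0 * y0 * z0"
proof -
  have "spec_norm (X ** Y ** Z) \<le> spec_norm (X ** Y) * spec_norm Z" by (rule spec_norm_mult)
  also have "\<dots> \<le> (spec_norm X * spec_norm Y) * spec_norm Z"
    by (rule mult_right_mono[OF spec_norm_mult spec_norm_nonneg])
  also have "\<dots> \<le> (x0 * y0) * z0"
    using assms spec_norm_nonneg[of X] spec_norm_nonneg[of Y] spec_norm_nonneg[of Z]
    by (intro mult_mono) auto
  finally show ?thesis .
qed

lemma quad_id: "x \<bullet> ((t *\<^sub>R mat 1) *v x) = t * (x \<bullet> (x::real^'n))"
  by (simp add: scaleR_matrix_vector_assoc[symmetric])

lemma sym_shift: "transpose A = A \<Longrightarrow> transpose (A + t *\<^sub>R mat 1) = (A::real^'n^'n) + t *\<^sub>R mat 1"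
  by (simp add: transpose_def vec_eq_iff mat_def)

lemma quad_shift: "x \<bullet> ((A + t *\<^sub>R mat 1) *v x) = x \<bullet> (A *v x) + t * (x \<bullet> (x::real^'n))"
  by (simp add: matrix_vector_mult_add_rdistrib inner_add_right quad_id)

lemma norm_by_quad:
  fixes M :: "real^'n^'n"
  assumes sM: "transpose M = M" and lo: "\<And>x. 0 \<le> x \<bullet> (M *v x)" and hi: "\<And>x. x \<bullet> (M *v x) \<le> c * (x \<bullet> x)"
  shows "spec_norm M \<le> c"
proof -
  obtain u l where onb: "onb u" and Me: "M = emat u l" using spectral[OF sM] by blast
  show ?thesis unfolding Me
  proof (rule emat_norm[OF onb])
    fix i
    have uu: "u i \<bullet> u i = 1" using onb unfolding onb_def by simp
    have "u i \<bullet> (M *v u i) = l i" using uu by (simp add: Me emat_eig[OF onb])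
    then show "\<bar>l i\<bar> \<le> c" using lo[of "u i"] hi[of "u i"] uu by simp
  qed
qed

lemma Qbar_quad:
  fixes cl :: "'n::finite \<Rightarrow> 'k::finite"
  assumes p: "0 < p" "p \<le> 1" and eta: "0 \<le> \<eta>" "\<eta> < 1/2"
    and d: "0 < d" and dd: "\<forall>i. d \<le> deg (exp_adj_pos p \<eta> cl) i"
  shows "x \<bullet> (sym_lap (exp_adj_pos p \<eta> cl) *v x) \<le> (1 + p * (1 - \<eta>) / d) * (x \<bullet> x)"
proof -
  let ?A = "exp_adj_pos p \<eta> cl"
  define y where "y = dh ?A *v x"
  have dp: "\<forall>i. deg ?A i > 0" using d dd by (meson less_le_trans)
  have "y \<bullet> (?A *v y) = y \<bullet> (gmat p \<eta> cl *v y) - p * (1 - \<eta>) * (y \<bullet> y)"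
    unfolding exp_pos_gmat
    by (simp add: matrix_vector_mult_diff_rdistrib inner_diff_right quad_id)
  also have "\<dots> \<ge> - (p * (1 - \<eta>) * (y \<bullet> y))" using gmat_psd[of p \<eta> y cl] p eta by simp
  finally have l1: "- (p * (1 - \<eta>) * (y \<bullet> y)) \<le> y \<bullet> (?A *v y)" .
  have "d * (y \<bullet> y) = (\<Sum>i\<in>UNIV. d * (y $ i)^2)" by (simp add: inner_vec_def sum_distrib_left power2_eq_square)
  also have "\<dots> \<le> (\<Sum>i\<in>UNIV. deg ?A i * (y $ i)^2)"
    using dd by (intro sum_mono mult_right_mono) auto
  also have "\<dots> = (\<Sum>i\<in>UNIV. (x $ i)^2)" unfolding y_def using dh_sq[OF dp] by simp
  also have "\<dots> = x \<bullet> x" by (simp add: inner_vec_def power2_eq_square)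
  finally have "d * (y \<bullet> y) \<le> x \<bullet> x" .
  then have yy: "y \<bullet> y \<le> (x \<bullet> x) / d" using d by (simp add: le_divide_eq mult.commute)
  have c0: "0 \<le> p * (1 - \<eta>)" using p eta by simp
  have "p * (1 - \<eta>) * (y \<bullet> y) \<le> p * (1 - \<eta>) * ((x \<bullet> x) / d)" by (rule mult_left_mono[OF yy c0])
  then have "x \<bullet> (sym_lap ?A *v x) \<le> x \<bullet> x + p * (1 - \<eta>) * ((x \<bullet> x) / d)"
    using l1 unfolding sym_lap_quad y_def by simp
  then show ?thesis by (simp add: algebra_simps)
qed



lemma deg_pos_of_entry:
  assumes nn: "\<And>j. 0 \<le> A $ i $ j" and pos: "0 < A $ i $ j"
  shows "0 < deg (A::real^'n^'n) i"
proof -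
  have "A $ i $ j \<le> deg A i" unfolding deg_def by (rule member_le_sum) (use nn in auto)
  then show ?thesis using pos by simp
qed

lemma deg_neg_pos:
  fixes cl :: "'n::finite \<Rightarrow> 'k::finite"
  assumes k2: "CARD('k) \<ge> 2" and surj: "surj cl" and p: "0 < p" and eta: "0 \<le> \<eta>" "\<eta> < 1/2"
  shows "0 < deg (exp_adj_neg p \<eta> cl) i"
proof -
  have "\<not> (\<forall>a\<in>(UNIV::'k set). \<forall>b\<in>UNIV. a = b)"
  proof
    assume "\<forall>a\<in>(UNIV::'k set). \<forall>b\<in>UNIV. a = b"
    then have "card (UNIV::'k set) \<le> Suc 0" using card_le_Suc0_iff_eq[of "UNIV::'k set"] by simp
    then show False using k2 by simp
  qed
  then obtain a b :: 'k where "a \<noteq> b" by blast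
  then obtain c where c: "c \<noteq> cl i" by metis
  obtain j where j: "cl j = c" using surj by (metis surjD)
  have "j \<noteq> i" using c j by blast
  then have "0 < exp_adj_neg p \<eta> cl $ i $ j" using c j p eta unfolding exp_adj_neg_def by auto
  then show ?thesis using exp_neg_nn[of p \<eta>] p eta by (intro deg_pos_of_entry) auto
qed

lemma ds_facts:
  fixes cl :: "'n::finite \<Rightarrow> 'k::finite"
  assumes surj: "surj cl" and p: "0 < p" "p \<le> 1" and eta: "0 \<le> \<eta>" "\<eta> < 1/2"
    and real: "ssbm_realization p \<eta> cl Ap Am" and dAp: "\<forall>i. deg Ap i > 0"
  shows "0 < ds_plus p \<eta> cl" and "\<forall>i. ds_plus p \<eta> cl \<le> deg (exp_adj_pos p \<eta> cl) i"
proof -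
  define M where "M = Min (range (\<lambda>c. card {i. cl i = c}))"
  have n0: "real CARD('n) > 0" by simp
  have ds: "ds_plus p \<eta> cl = p * (real CARD('n) * \<eta> + real M * (1 - 2 * \<eta>) - (1 - \<eta>))"
    unfolding ds_plus_def smin_def M_def using n0 by (simp add: algebra_simps)
  have Mle: "M \<le> card {j. cl j = cl i}" for i
    unfolding M_def by (rule Min_le) auto
  show "\<forall>i. ds_plus p \<eta> cl \<le> deg (exp_adj_pos p \<eta> cl) i"
  proof
    fix i
    have "real M * (1 - 2 * \<eta>) \<le> real (card {j. cl j = cl i}) * (1 - 2 * \<eta>)"
      using Mle[of i] eta by (intro mult_right_mono) auto
    then show "ds_plus p \<eta> cl \<le> deg (exp_adj_pos p \<eta> cl) i"
      unfolding ds deg_exp_pos using p by (intro mult_left_mono) auto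
  qed
  have "M \<in> range (\<lambda>c. card {i. cl i = c})" unfolding M_def by (rule Min_in) auto
  then obtain c0 where c0: "M = card {i. cl i = c0}" by blast
  obtain i0 where i0: "cl i0 = c0" using surj by (metis surjD)
  have dsi0: "ds_plus p \<eta> cl = deg (exp_adj_pos p \<eta> cl) i0"
    unfolding ds deg_exp_pos c0 i0 ..
  have rl: "\<forall>i j. Ap $ i $ j \<in> {0, 1}" and diag: "\<forall>i. Ap $ i $ i = 0"
    and wrong: "\<forall>i j. i \<noteq> j \<longrightarrow> (Ap $ i $ j = 1 \<and> cl i \<noteq> cl j \<longrightarrow> \<eta> > 0)"
    using real unfolding ssbm_realization_def by auto
  have "\<exists>j. Ap $ i0 $ j \<noteq> 0"
  proof (rule ccontr)
    assume "\<not> (\<exists>j. Ap $ i0 $ j \<noteq> 0)"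
    then have "deg Ap i0 = 0" unfolding deg_def by simp
    then show False using dAp by (metis less_irrefl)
  qed
  then obtain j where "Ap $ i0 $ j \<noteq> 0" by blast
  then have a1: "Ap $ i0 $ j = 1" using rl by auto
  then have ji: "j \<noteq> i0" using diag by auto
  have "0 < exp_adj_pos p \<eta> cl $ i0 $ j"
  proof (cases "cl i0 = cl j")
    case True then show ?thesis using ji p eta unfolding exp_adj_pos_def by auto
  next
    case False
    then have "\<eta> > 0" using wrong a1 ji by metis
    then show ?thesis using ji p False unfolding exp_adj_pos_def by auto
  qed
  then have "0 < deg (exp_adj_pos p \<eta> cl) i0"
    using exp_pos_nn[of p \<eta>] p eta by (intro deg_pos_of_entry) auto
  then show "0 < ds_plus p \<eta> cl" using dsi0 by simp
qed



theorem mainTheorem14: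
  fixes cl :: "'n::finite \<Rightarrow> 'k::finite"
    and p \<eta> tau_plus tau_minus \<Delta>P \<Delta>Q :: real
    and Ap Am :: "real^'n^'n"
  assumes "CARD('n) \<ge> 2" and "CARD('k) \<ge> 2" and "surj cl"
    and "0 < p" and "p \<le> 1" and "0 \<le> \<eta>" and "\<eta> < 1/2"
    and "ssbm_realization p \<eta> cl Ap Am"
    and "\<forall>i. deg Ap i > 0" and "\<forall>i. deg Am i > 0"
    and "tau_plus > 0" and "tau_minus \<ge> 0"
    and "spec_norm ((sym_lap Am + tau_plus *\<^sub>R mat 1)
           - (sym_lap (exp_adj_neg p \<eta> cl) + tau_plus *\<^sub>R mat 1)) \<le> \<Delta>P"
    and "spec_norm ((sym_lap Ap + tau_minus *\<^sub>R mat 1)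
           - (sym_lap (exp_adj_pos p \<eta> cl) + tau_minus *\<^sub>R mat 1)) \<le> \<Delta>Q"
  shows "spec_norm (T_mat (sym_lap Ap) (sym_lap Am) tau_plus tau_minus
           - T_mat (sym_lap (exp_adj_pos p \<eta> cl)) (sym_lap (exp_adj_neg p \<eta> cl)) tau_plus tau_minus)
         \<le> (1 + tau_minus + p * (1 - \<eta>) / ds_plus p \<eta> cl + \<Delta>Q) / tau_plus
              * (\<Delta>P / tau_plus + 2 * sqrt (\<Delta>P / tau_plus)) + \<Delta>Q / tau_plus"
proof -
  note k2 = assms(2) and surj = assms(3) and p = assms(4,5) and eta = assms(6,7)
    and real = assms(8) and dAp = assms(9) and dAm = assms(10) and tp = assms(11) and tm = assms(12)
    and hP = assms(13) and hQ = assms(14)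
  define \<tau> where "\<tau> = tau_plus"
  define Ab where "Ab = exp_adj_pos p \<eta> cl"
  define Bb where "Bb = exp_adj_neg p \<eta> cl"
  define P where "P = sym_lap Am + tau_plus *\<^sub>R mat 1"
  define Pb where "Pb = sym_lap Bb + tau_plus *\<^sub>R mat 1"
  define Q where "Q = sym_lap Ap + tau_minus *\<^sub>R mat 1"
  define Qb where "Qb = sym_lap Ab + tau_minus *\<^sub>R mat 1"
  define d where "d = ds_plus p \<eta> cl"
  define \<alpha> where "\<alpha> = 1 + tau_minus + p * (1 - \<eta>) / d"
  have rl: "\<forall>i j. Ap $ i $ j \<in> {0, 1} \<and> Am $ i $ j \<in> {0, 1}" and sAp: "transpose Ap = Ap"
    and sAm: "transpose Am = Am"
    using real unfolding ssbm_realization_def by auto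
  have nnAp: "0 \<le> Ap $ i $ j" for i j using rl[rule_format, of i j] by auto
  have nnAm: "0 \<le> Am $ i $ j" for i j using rl[rule_format, of i j] by auto
  have nnAb: "0 \<le> Ab $ i $ j" and nnBb: "0 \<le> Bb $ i $ j" for i j
    unfolding Ab_def Bb_def using p eta by (auto intro!: exp_pos_nn exp_neg_nn)
  have sAb: "transpose Ab = Ab" and sBb: "transpose Bb = Bb"
    unfolding Ab_def Bb_def by (rule exp_pos_sym exp_neg_sym)+
  have dBb: "\<forall>i. deg Bb i > 0" unfolding Bb_def using deg_neg_pos[OF k2 surj p(1) eta] by blast
  have d0: "0 < d" and dd: "\<forall>i. d \<le> deg Ab i"
    using ds_facts[OF surj p eta real dAp] unfolding d_def Ab_def by auto
  have dAb: "\<forall>i. deg Ab i > 0" using d0 dd by (meson less_le_trans)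
  have sP: "transpose P = P" unfolding P_def by (rule sym_shift[OF sym_lap_sym[OF sAm]])
  have sPb: "transpose Pb = Pb" unfolding Pb_def by (rule sym_shift[OF sym_lap_sym[OF sBb]])
  have posP: "\<forall>x. \<tau> * (x \<bullet> x) \<le> x \<bullet> (P *v x)"
    unfolding P_def \<tau>_def quad_shift using sym_lap_psd[OF sAm nnAm dAm] by simp
  have posPb: "\<forall>x. \<tau> * (x \<bullet> x) \<le> x \<bullet> (Pb *v x)"
    unfolding Pb_def \<tau>_def quad_shift using sym_lap_psd[OF sBb nnBb dBb] by simp
  have t0: "\<tau> > 0" using tp \<tau>_def by simp
  obtain R where sR: "transpose R = R" and pR: "\<forall>x. 0 \<le> x \<bullet> (R *v x)" and RR: "R ** R = P"
    and RS: "R ** mat_inv_sqrt P = mat 1" and SR: "mat_inv_sqrt P ** R = mat 1"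
    and nS: "spec_norm (mat_inv_sqrt P) \<le> 1 / sqrt \<tau>"
    using sqrt_facts[OF sP posP t0] by blast
  obtain Rb where sRb: "transpose Rb = Rb" and pRb: "\<forall>x. 0 \<le> x \<bullet> (Rb *v x)" and RRb: "Rb ** Rb = Pb"
    and RSb: "Rb ** mat_inv_sqrt Pb = mat 1" and SRb: "mat_inv_sqrt Pb ** Rb = mat 1"
    and nSb: "spec_norm (mat_inv_sqrt Pb) \<le> 1 / sqrt \<tau>"
    using sqrt_facts[OF sPb posPb t0] by blast
  define S where "S = mat_inv_sqrt P"
  define Sb where "Sb = mat_inv_sqrt Pb"
  define E where "E = S - Sb"
  have dP: "spec_norm (P - Pb) \<le> \<Delta>P" using hP unfolding P_def Pb_def Bb_def .
  have dQ: "spec_norm (Q - Qb) \<le> \<Delta>Q" using hQ unfolding Q_def Qb_def Ab_def .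
  have DP0: "0 \<le> \<Delta>P" using dP spec_norm_nonneg order_trans by blast
  have DQ0: "0 \<le> \<Delta>Q" using dQ spec_norm_nonneg order_trans by blast
  have "spec_norm (R - Rb) \<le> sqrt (spec_norm (R ** R - Rb ** Rb))" by (rule sqrt_lip[OF sR sRb pR pRb])
  also have "\<dots> \<le> sqrt \<Delta>P" using dP RR RRb by simp
  finally have nRR: "spec_norm (Rb - R) \<le> sqrt \<Delta>P" by (simp add: spec_norm_minus_commute)
  have Eeq: "E = S ** (Rb - R) ** Sb"
  proof (rule matrix_eq[THEN iffD2], intro allI)
    fix x
    have "(S ** (Rb - R) ** Sb) *v x = S *v (Rb *v (Sb *v x)) - S *v (R *v (Sb *v x))"
      by (simp add: mvm_assoc' matrix_vector_mult_diff_rdistrib matrix_vector_mult_diff_distrib)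
    also have "\<dots> = (S ** (Rb ** Sb)) *v x - ((S ** R) ** Sb) *v x" by (simp add: mvm_assoc')
    also have "\<dots> = E *v x" using RSb SR unfolding S_def Sb_def E_def
      by (simp add: matrix_vector_mult_diff_rdistrib)
    finally show "E *v x = (S ** (Rb - R) ** Sb) *v x" by simp
  qed
  define a where "a = 1 / sqrt \<tau>"
  have a0: "0 \<le> a" unfolding a_def using t0 by simp
  have "a * a = 1 / (sqrt \<tau> * sqrt \<tau>)" unfolding a_def by simp
  also have "\<dots> = 1 / \<tau>" using t0 by simp
  finally have aa: "a * a = 1 / \<tau>" .
  have nS': "spec_norm S \<le> a" and nSb': "spec_norm Sb \<le> a" using nS nSb unfolding S_def Sb_def a_def by auto
  define e where "e = a * sqrt \<Delta>P * a"
  have nE: "spec_norm E \<le> e" unfolding Eeq e_def by (rule spec_norm3[OF nS' nRR nSb'])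
  have sQb: "transpose Qb = Qb" unfolding Qb_def by (rule sym_shift[OF sym_lap_sym[OF sAb]])
  have nQb: "spec_norm Qb \<le> \<alpha>"
  proof (rule norm_by_quad[OF sQb])
    fix x :: "real^'n"
    show "0 \<le> x \<bullet> (Qb *v x)" unfolding Qb_def quad_shift
      using sym_lap_psd[OF sAb nnAb dAb, of x] tm by simp
    have "x \<bullet> (sym_lap Ab *v x) \<le> (1 + p * (1 - \<eta>) / d) * (x \<bullet> x)"
      unfolding Ab_def by (rule Qbar_quad[OF p eta d0 dd[unfolded Ab_def]])
    then show "x \<bullet> (Qb *v x) \<le> \<alpha> * (x \<bullet> x)" unfolding Qb_def quad_shift \<alpha>_def
      by (simp add: algebra_simps)
  qed
  define \<beta> where "\<beta> = \<alpha> + \<Delta>Q"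
  have nQ: "spec_norm Q \<le> \<beta>"
  proof -
    have "spec_norm Q \<le> spec_norm Qb + spec_norm (Q - Qb)" using spec_norm_add[of Qb "Q - Qb"] by simp
    then show ?thesis using nQb dQ unfolding \<beta>_def by simp
  qed
  have b0: "0 \<le> \<beta>" using nQ spec_norm_nonneg order_trans by blast
  have Teq: "T_mat (sym_lap Ap) (sym_lap Am) tau_plus tau_minus
           - T_mat (sym_lap (exp_adj_pos p \<eta> cl)) (sym_lap (exp_adj_neg p \<eta> cl)) tau_plus tau_minus
        = Sb ** (Q - Qb) ** Sb + E ** Q ** Sb + Sb ** Q ** E + E ** Q ** E"
  proof -
    have "T_mat (sym_lap Ap) (sym_lap Am) tau_plus tau_minus
           - T_mat (sym_lap (exp_adj_pos p \<eta> cl)) (sym_lap (exp_adj_neg p \<eta> cl)) tau_plus tau_minus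
          = S ** Q ** S - Sb ** Qb ** Sb"
      unfolding T_mat_def S_def Sb_def P_def Pb_def Q_def Qb_def Ab_def Bb_def ..
    also have "\<dots> = Sb ** (Q - Qb) ** Sb + E ** Q ** Sb + Sb ** Q ** E + E ** Q ** E"
      by (rule expand_T) (simp add: E_def)
    finally show ?thesis .
  qed
  have "spec_norm (Sb ** (Q - Qb) ** Sb + E ** Q ** Sb + Sb ** Q ** E + E ** Q ** E)
      \<le> spec_norm (Sb ** (Q - Qb) ** Sb) + spec_norm (E ** Q ** Sb) + spec_norm (Sb ** Q ** E) + spec_norm (E ** Q ** E)"
    by (meson add_mono order_trans order_refl spec_norm_add)
  also have "\<dots> \<le> a * \<Delta>Q * a + e * \<beta> * a + a * \<beta> * e + e * \<beta> * e"
    by (intro add_mono spec_norm3 nSb' nS' nE nQ dQ)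
  also have "\<dots> = (\<alpha> + \<Delta>Q) / tau_plus * (\<Delta>P / tau_plus + 2 * sqrt (\<Delta>P / tau_plus)) + \<Delta>Q / tau_plus"
  proof -
    have s: "sqrt (\<Delta>P / tau_plus) = sqrt \<Delta>P * a" unfolding a_def \<tau>_def by (simp add: real_sqrt_divide)
    have sq: "sqrt \<Delta>P * sqrt \<Delta>P = \<Delta>P" using DP0 by simp
    have "e * \<beta> * e = \<beta> * (sqrt \<Delta>P * sqrt \<Delta>P) * ((a * a) * (a * a))" unfolding e_def by (simp add: algebra_simps)
    moreover have "e * \<beta> * a + a * \<beta> * e = 2 * \<beta> * (a * a) * (sqrt \<Delta>P * a)" unfolding e_def by (simp add: algebra_simps)
    moreover have "a * \<Delta>Q * a = \<Delta>Q * (a * a)" by (simp add: algebra_simps)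
    ultimately show ?thesis unfolding s sq aa \<beta>_def \<tau>_def by (simp add: algebra_simps add_divide_distrib)
  qed
  finally show ?thesis unfolding Teq \<alpha>_def d_def .
qed

end
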